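(* Let $W,V$ be subspaces of $\mathbb{C}^n$ with $\mathbb{C}^n=W\oplus V^\perp$, let $\{\mathbf{w}_i\}_{i=1}^N$ be a frame for $W$ with frame operator $\mathbf{S}=\sum_{i=1}^N\mathbf{w}_i\mathbf{w}_i^*$, and let $\{\mathbf{v}_i\}_{i=1}^N$ be an oblique dual frame of $\{\mathbf{w}_i\}_{i=1}^N$ on $V$ such that $\langle\mathbf{w}_i,\mathbf{v}_i\rangle=\langle\mathbf{w}_j,\mathbf{v}_j\rangle$ for all $i,j$. Let $p=2k$ where $k\ge1$, and let $d_W=\dim W$. Then $$\sum_{i=1}^N\sum_{j=1}^N|\langle\mathbf{w}_i,\mathbf{v}_j\rangle|^p\ge\frac{\left|d_W-\frac{d_W^2}{N}\right|^{p/2}}{N^{\frac p2-1}(N-1)^{\frac p2-1}}+\frac{d_W^p}{N^{p-1}}.$$ Furthermore, when $k>1$, equality holds if and only if $|\langle\mathbf{w}_i,\mathbf{v}_j\rangle|$ is constant over all $i\ne j$ and $\mathbf{v}_j=\boldsymbol{\pi}_{VW^\perp}\mathbf{S}^\dagger\mathbf{w}_j$ for each $j$.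
   Context: The inner product on $\mathbb{C}^n$ is $\langle\mathbf{x},\mathbf{y}\rangle=\mathbf{y}^*\mathbf{x}$. $\mathbf{S}^\dagger$ is the Moore–Penrose inverse. When $\mathbb{C}^n=W\oplus V^\perp$ (equivalently $\mathbb{C}^n=V\oplus W^\perp$), $\boldsymbol{\pi}_{WV^\perp}$ is the oblique projection onto $W$ along $V^\perp$ and $\boldsymbol{\pi}_{VW^\perp}$ the oblique projection onto $V$ along $W^\perp$. A finite family in $W$ is a frame for $W$ if it spans $W$. A frame $\{\mathbf{v}_i\}_{i=1}^N\subset V$ for $V$ is an oblique dual frame of $\{\mathbf{w}_i\}$ on $V$ if $\boldsymbol{\pi}_{WV^\perp}\mathbf{f}=\sum_{i=1}^N\langle\mathbf{f},\mathbf{v}_i\rangle\mathbf{w}_i$ for all $\mathbf{f}\in\mathbb{C}^n$. *)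

theory Defs
  imports "HOL-Analysis.Analysis"
begin

text \<open>Vectors of C^n are modelled as complex^'n; complex-linear notions
  (subspace, span, dim) are those of the interpretation vec of vector_space with
  scalar multiplication (*s).\<close>

definition cinner :: "complex^'n \<Rightarrow> complex^'n \<Rightarrow> complex" where
  "cinner x y = (\<Sum>i\<in>UNIV. x $ i * cnj (y $ i))"

definition corth :: "(complex^'n) set \<Rightarrow> (complex^'n) set" where
  "corth V = {x. \<forall>v\<in>V. cinner x v = 0}"

definition cdirect_sum :: "(complex^'n) set \<Rightarrow> (complex^'n) set \<Rightarrow> bool" where
  "cdirect_sum A B \<longleftrightarrow> A \<inter> B = {0} \<and> (\<forall>x. \<exists>a\<in>A. \<exists>b\<in>B. x = a + b)"

definition oblique_proj :: "(complex^'n) set \<Rightarrow> (complex^'n) set \<Rightarrow> complex^'n \<Rightarrow> complex^'n" where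
  "oblique_proj A B x = (THE a. a \<in> A \<and> x - a \<in> B)"

definition cadjoint :: "complex^'n^'m \<Rightarrow> complex^'m^'n" where
  "cadjoint M = (\<chi> i j. cnj (M $ j $ i))"

definition mp_inverse :: "complex^'n^'m \<Rightarrow> complex^'m^'n" where
  "mp_inverse M = (THE X. M ** X ** M = M \<and> X ** M ** X = X \<and>
      cadjoint (M ** X) = M ** X \<and> cadjoint (X ** M) = X ** M)"

definition frame_for :: "(complex^'n) set \<Rightarrow> (nat \<Rightarrow> complex^'n) \<Rightarrow> nat \<Rightarrow> bool" where
  "frame_for W w N \<longleftrightarrow> (\<forall>i<N. w i \<in> W) \<and> vec.span (w ` {..<N}) = W"

definition frame_operator :: "(nat \<Rightarrow> complex^'n) \<Rightarrow> nat \<Rightarrow> complex^'n^'n" where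
  "frame_operator w N = (\<chi> a b. \<Sum>i<N. w i $ a * cnj (w i $ b))"

definition oblique_dual_frame ::
  "(complex^'n) set \<Rightarrow> (complex^'n) set \<Rightarrow> (nat \<Rightarrow> complex^'n) \<Rightarrow> (nat \<Rightarrow> complex^'n) \<Rightarrow> nat \<Rightarrow> bool" where
  "oblique_dual_frame W V w v N \<longleftrightarrow> frame_for V v N \<and>
     (\<forall>f. oblique_proj W (corth V) f = (\<Sum>i<N. cinner f (v i) *s w i))"

end

theory Submission
  imports Defs
begin

lemma cinner_add_left: "cinner (x + y) z = cinner x z + cinner y z"
  by (simp add: cinner_def distrib_right sum.distrib)
lemma cinner_add_right: "cinner z (x + y) = cinner z x + cinner z y"
  by (simp add: cinner_def distrib_left sum.distrib)
lemma cinner_diff_left: "cinner (x - y) z = cinner x z - cinner y z"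
  by (simp add: cinner_def left_diff_distrib sum_subtractf)
lemma cinner_diff_right: "cinner z (x - y) = cinner z x - cinner z y"
  by (simp add: cinner_def right_diff_distrib sum_subtractf)
lemma cinner_scale_left: "cinner (c *s x) z = c * cinner x z"
  by (simp add: cinner_def sum_distrib_left mult.assoc)
lemma cinner_scale_right: "cinner z (c *s x) = cnj c * cinner z x"
  by (simp add: cinner_def sum_distrib_left algebra_simps)
lemma cinner_zero_left[simp]: "cinner 0 z = 0"
  by (simp add: cinner_def)
lemma cinner_zero_right[simp]: "cinner z 0 = 0"
  by (simp add: cinner_def)
lemma cinner_commute: "cinner y x = cnj (cinner x y)"
  by (simp add: cinner_def mult.commute)
lemma cinner_sum_left: "finite A \<Longrightarrow> cinner (\<Sum>i\<in>A. f i) z = (\<Sum>i\<in>A. cinner (f i) z)"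
  by (induct A rule: finite_induct) (auto simp: cinner_add_left)
lemma cinner_sum_right: "finite A \<Longrightarrow> cinner z (\<Sum>i\<in>A. f i) = (\<Sum>i\<in>A. cinner z (f i))"
  by (induct A rule: finite_induct) (auto simp: cinner_add_right)
lemma cinner_self: "cinner x x = complex_of_real (\<Sum>i\<in>UNIV. (cmod (x $ i))^2)"
  unfolding cinner_def of_real_sum by (simp add: complex_norm_square del: of_real_power)
lemma cinner_self_eq_0: "cinner x x = 0 \<longleftrightarrow> x = 0"
proof
  assume "cinner x x = 0"
  then have "(\<Sum>i\<in>UNIV. (cmod (x $ i))^2) = 0" unfolding cinner_self of_real_eq_0_iff .
  then have "\<forall>i\<in>UNIV. (cmod (x $ i))^2 = 0" by (subst (asm) sum_nonneg_eq_0_iff) auto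
  then show "x = 0" by (simp add: vec_eq_iff)
qed simp
lemma Re_cinner: "Re (cinner x y) = x \<bullet> y"
  by (simp add: cinner_def inner_vec_def inner_complex_def Re_sum)
lemma cinner_i: "cinner x (\<i> *s y) = - \<i> * cinner x y"
  by (simp add: cinner_scale_right)


lemma scaleR_vec_complex: "r *\<^sub>R (x::complex^'n) = complex_of_real r *s x"
  unfolding vec_eq_iff by (metis vector_scaleR_component vector_smult_component scaleR_conv_of_real)

lemma vec_subspace_real: "vec.subspace (R::(complex^'n) set) \<Longrightarrow> subspace R"
  unfolding subspace_def vec.subspace_def by (metis scaleR_vec_complex)

lemma complex_decomp:
  fixes R :: "(complex^'n) set"
  assumes "vec.subspace R"
  obtains y where "y \<in> R" "\<And>r. r \<in> R \<Longrightarrow> cinner (x - y) r = 0"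
proof -
  have sR: "span R = R" using vec_subspace_real[OF assms] by simp
  obtain y z where y: "y \<in> span R" and z: "\<And>w. w \<in> span R \<Longrightarrow> orthogonal z w" and xyz: "x = y + z"
    using orthogonal_subspace_decomp_exists[of R x] by blast
  have "cinner (x - y) r = 0" if r: "r \<in> R" for r
  proof -
    have "\<i> *s r \<in> R" using r assms by (simp add: vec.subspace_scale)
    then have "Re (cinner z (\<i> *s r)) = 0" using z sR by (simp add: Re_cinner orthogonal_def)
    then have im: "Im (cinner z r) = 0" by (simp add: cinner_i)
    have "Re (cinner z r) = 0" using z sR r by (simp add: Re_cinner orthogonal_def)
    with im have "cinner z r = 0" by (simp add: complex_eq_iff)
    then show ?thesis using xyz by simp
  qed
  then show thesis using that y sR by blast
qed

lemma cinner_span_zero: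
  assumes "\<And>s. s \<in> A \<Longrightarrow> cinner x s = 0" "y \<in> vec.span A"
  shows "cinner x y = 0"
  using assms(2)
proof (induct rule: vec.span_induct_alt)
  case base then show ?case by simp
next
  case (step c s y) then show ?case using assms(1) by (simp add: cinner_add_right cinner_scale_right)
qed

lemma frame_op_mult:
  "frame_operator w N *v x = (\<Sum>i<N. cinner x (w i) *s w i)"
  apply (simp add: vec_eq_iff frame_operator_def matrix_vector_mult_def cinner_def sum_component
      sum_distrib_left sum_distrib_right)
  apply (subst sum.swap) apply (simp add: mult_ac)
  done

lemma oblique_proj_unique:
  assumes "vec.subspace A" "vec.subspace B" "A \<inter> B = {0}" "a \<in> A" "x - a \<in> B"
  shows "oblique_proj A B x = a"
  unfolding oblique_proj_def
proof (rule the_equality)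
  show "a \<in> A \<and> x - a \<in> B" using assms by simp
  fix b assume b: "b \<in> A \<and> x - b \<in> B"
  have "b - a \<in> A" using b assms by (simp add: vec.subspace_diff)
  moreover have "(x - a) - (x - b) \<in> B" using b vec.subspace_diff[OF assms(2) assms(5), of "x - b"] by simp
  moreover have "(x - a) - (x - b) = b - a" by simp
  ultimately have "b - a \<in> A \<inter> B" by simp
  then show "b = a" using assms(3) by simp
qed

lemma oblique_proj_prop:
  assumes "vec.subspace A" "vec.subspace B" "A \<inter> B = {0}" "\<exists>a\<in>A. x - a \<in> B"
  shows "oblique_proj A B x \<in> A \<and> x - oblique_proj A B x \<in> B"
  using assms oblique_proj_unique by metis

lemma corth_subspace: "vec.subspace (corth A)"
  unfolding vec.subspace_def corth_def by (auto simp: cinner_add_left cinner_scale_left)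


lemma cadjoint_mult_vec: "cinner (M *v x) y = cinner x (cadjoint M *v y)"
  unfolding cinner_def cadjoint_def matrix_vector_mult_def
  apply (simp add: sum_distrib_left sum_distrib_right mult_ac)
  apply (subst sum.swap) apply (simp add: mult_ac)
  done

lemma cadjoint_cadjoint[simp]: "cadjoint (cadjoint M) = M"
  by (simp add: cadjoint_def vec_eq_iff)

lemma cadjoint_mult: "cadjoint (A ** B) = cadjoint B ** cadjoint A"
  by (simp add: cadjoint_def vec_eq_iff matrix_matrix_mult_def mult.commute)

lemma cinner_eq_right: "(\<And>x. cinner x y = cinner x z) \<Longrightarrow> y = z"
proof -
  assume h: "\<And>x. cinner x y = cinner x z"
  have "cinner (y - z) (y - z) = 0" using h[of "y - z"] by (simp add: cinner_diff_right)
  then show "y = z" by (simp add: cinner_self_eq_0)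
qed

lemma herm_from_cinner:
  assumes "\<And>x y. cinner (M *v x) y = cinner x (M *v y)"
  shows "cadjoint M = M"
proof -
  have "cadjoint M *v y = M *v y" for y
    by (rule cinner_eq_right) (simp add: assms cadjoint_mult_vec[symmetric])
  then show ?thesis by (simp add: matrix_eq)
qed

lemma mp_unique:
  fixes S :: "complex^'n^'m"
  assumes X: "S ** X ** S = S" "X ** S ** X = X" "cadjoint (S ** X) = S ** X" "cadjoint (X ** S) = X ** S"
  assumes Y: "S ** Y ** S = S" "Y ** S ** Y = Y" "cadjoint (S ** Y) = S ** Y" "cadjoint (Y ** S) = Y ** S"
  shows "X = Y"
proof -
  have a: "cadjoint S = cadjoint S ** S ** Y"
  proof -
    have "cadjoint S = cadjoint ((S ** Y) ** S)" using Y(1) by simp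
    also have "\<dots> = cadjoint S ** cadjoint (S ** Y)" by (rule cadjoint_mult)
    finally show ?thesis using Y(3) by (simp add: matrix_mul_assoc)
  qed
  have b: "X = X ** cadjoint X ** cadjoint S"
  proof -
    have "X = X ** (S ** X)" using X(2) by (simp add: matrix_mul_assoc)
    also have "\<dots> = X ** cadjoint (S ** X)" using X(3) by simp
    finally show ?thesis by (simp add: cadjoint_mult matrix_mul_assoc)
  qed
  have c: "cadjoint S = X ** S ** cadjoint S"
  proof -
    have "cadjoint S = cadjoint (S ** (X ** S))" using X(1) by (simp add: matrix_mul_assoc)
    also have "\<dots> = cadjoint (X ** S) ** cadjoint S" by (rule cadjoint_mult)
    finally show ?thesis using X(4) by simp
  qed
  have d: "Y = cadjoint S ** cadjoint Y ** Y"
  proof -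
    have "Y = (Y ** S) ** Y" using Y(2) by simp
    also have "\<dots> = cadjoint (Y ** S) ** Y" using Y(4) by simp
    finally show ?thesis by (simp add: cadjoint_mult)
  qed
  have "X = X ** cadjoint X ** (cadjoint S ** S ** Y)" using a b by metis
  also have "\<dots> = (X ** cadjoint X ** cadjoint S) ** S ** Y" by (simp add: matrix_mul_assoc)
  also have "\<dots> = X ** S ** Y" using b by simp
  finally have e: "X = X ** S ** Y" .
  have "Y = (X ** S ** cadjoint S) ** cadjoint Y ** Y" using c d by metis
  also have "\<dots> = X ** S ** (cadjoint S ** cadjoint Y ** Y)" by (simp add: matrix_mul_assoc)
  also have "\<dots> = X ** S ** Y" using d by simp
  finally show ?thesis using e by simp
qed


lemma mv_scale: "(A::complex^'n^'m) *v (c *s x) = c *s (A *v x)"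
  by (simp add: vec_eq_iff matrix_vector_mult_def sum_distrib_left mult_ac)

lemma mv_sum: "finite I \<Longrightarrow> (A::complex^'n^'m) *v (\<Sum>i\<in>I. f i) = (\<Sum>i\<in>I. A *v f i)"
  by (induct I rule: finite_induct) (auto simp: matrix_vector_right_distrib)

lemma vec_subspace_sum: "vec.subspace A \<Longrightarrow> (\<And>i. i \<in> I \<Longrightarrow> f i \<in> A) \<Longrightarrow> (\<Sum>i\<in>I. f i) \<in> A"
  by (rule vec.subspace_sum)

lemma range_mv_subspace: "vec.subspace (range (\<lambda>x. (A::complex^'n^'m) *v x))"
  unfolding vec.subspace_def
  apply (auto simp: mv_scale[symmetric] intro: range_eqI[of _ _ 0] range_eqI)
  by (metis matrix_vector_right_distrib rangeI)

lemma mult_cnj_sq: "z * cnj z = (complex_of_real (cmod z))^2"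
  by (metis complex_norm_square of_real_power)

lemma tangent_aux:
  fixes x m :: real
  assumes "x \<ge> 0" "m \<ge> 0"
  shows "x^(Suc k) - m^(Suc k) - real (Suc k) * m^k * (x - m) \<ge> 0 \<and>
         (k \<ge> 1 \<longrightarrow> x \<noteq> m \<longrightarrow> x^(Suc k) - m^(Suc k) - real (Suc k) * m^k * (x - m) > 0)"
proof (induct k)
  case 0 then show ?case by simp
next
  case (Suc k)
  let ?g = "\<lambda>k. x^(Suc k) - m^(Suc k) - real (Suc k) * m^k * (x - m)"
  have rec: "?g (Suc k) = x * ?g k + real (Suc k) * m^k * (x - m)^2"
    by (simp add: algebra_simps power2_eq_square)
  have g0: "?g k \<ge> 0" using Suc by blast
  have nn: "x * ?g k \<ge> 0" using g0 assms by simp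
  have nn2: "real (Suc k) * m^k * (x - m)^2 \<ge> 0" using assms by simp
  have strict: "?g (Suc k) > 0" if "x \<noteq> m"
  proof (cases "m = 0")
    case True
    then have "x > 0" using that assms by simp
    then show ?thesis using True by simp
  next
    case False
    then have "m > 0" using assms by simp
    then have "real (Suc k) * m^k * (x - m)^2 > 0" using that by simp
    then show ?thesis using rec nn by linarith
  qed
  show ?case using rec nn nn2 strict by auto
qed

lemma power_mean:
  fixes x :: "'a \<Rightarrow> real"
  assumes fin: "finite Os" and nn: "\<And>s. s \<in> Os \<Longrightarrow> x s \<ge> 0" and k: "k \<ge> 1"
  shows "(\<Sum>s\<in>Os. x s)^k / real (card Os)^(k-1) \<le> (\<Sum>s\<in>Os. x s ^ k)"
    and "k \<ge> 2 \<Longrightarrow> Os \<noteq> {} \<Longrightarrow>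
         ((\<Sum>s\<in>Os. x s ^ k) = (\<Sum>s\<in>Os. x s)^k / real (card Os)^(k-1) \<longleftrightarrow>
          (\<forall>s\<in>Os. x s = (\<Sum>s\<in>Os. x s) / real (card Os)))"
proof -
  obtain k' where k': "k = Suc k'" using k by (cases k) auto
  let ?M = "real (card Os)" and ?T = "\<Sum>s\<in>Os. x s"
  let ?m = "?T / ?M"
  have key: "Os \<noteq> {} \<Longrightarrow> (\<Sum>s\<in>Os. x s ^ k) - ?T^k / ?M^(k-1) =
      (\<Sum>s\<in>Os. x s^(Suc k') - ?m^(Suc k') - real (Suc k') * ?m^k' * (x s - ?m))"
  proof -
    assume ne: "Os \<noteq> {}"
    then have M: "?M > 0" using fin by (simp add: card_gt_0_iff)
    have "(\<Sum>s\<in>Os. x s^(Suc k') - ?m^(Suc k') - real (Suc k') * ?m^k' * (x s - ?m))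
        = (\<Sum>s\<in>Os. x s ^ k) - ?M * ?m^(Suc k') - real (Suc k') * ?m^k' * (?T - ?M * ?m)"
      by (simp add: sum_subtractf sum_distrib_left[symmetric] k' right_diff_distrib)
    also have "?T - ?M * ?m = 0" using M by simp
    also have "?M * ?m^(Suc k') = ?T^k / ?M^(k-1)" using M
      by (simp add: k' power_divide field_simps)
    finally show ?thesis by simp
  qed
  have m0: "?m \<ge> 0" using nn by (simp add: sum_nonneg)
  show "?T^k / ?M^(k-1) \<le> (\<Sum>s\<in>Os. x s ^ k)"
  proof (cases "Os = {}")
    case True then show ?thesis using k by (cases k) auto
  next
    case False
    have "0 \<le> (\<Sum>s\<in>Os. x s^(Suc k') - ?m^(Suc k') - real (Suc k') * ?m^k' * (x s - ?m))"
      by (intro sum_nonneg) (use tangent_aux[OF nn m0] in auto)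
    then show ?thesis using key[OF False] by simp
  qed
  assume k2: "k \<ge> 2" and ne: "Os \<noteq> {}"
  have k1: "k' \<ge> 1" using k2 k' by simp
  show "(\<Sum>s\<in>Os. x s ^ k) = ?T^k / ?M^(k-1) \<longleftrightarrow> (\<forall>s\<in>Os. x s = ?m)"
  proof
    assume eq: "(\<Sum>s\<in>Os. x s ^ k) = ?T^k / ?M^(k-1)"
    show "\<forall>s\<in>Os. x s = ?m"
    proof (rule ccontr)
      assume "\<not> (\<forall>s\<in>Os. x s = ?m)"
      then obtain s0 where s0: "s0 \<in> Os" "x s0 \<noteq> ?m" by blast
      have "0 < (\<Sum>s\<in>Os. x s^(Suc k') - ?m^(Suc k') - real (Suc k') * ?m^k' * (x s - ?m))"
      proof (rule sum_pos2[OF fin s0(1)])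
        show "0 < x s0^(Suc k') - ?m^(Suc k') - real (Suc k') * ?m^k' * (x s0 - ?m)"
          using conjunct2[OF tangent_aux[OF nn[OF s0(1)] m0, of k']] k1 s0(2) by simp
        show "\<And>s. s \<in> Os \<Longrightarrow> 0 \<le> x s^(Suc k') - ?m^(Suc k') - real (Suc k') * ?m^k' * (x s - ?m)"
          using tangent_aux[OF nn m0] by simp
      qed
      moreover have "(\<Sum>s\<in>Os. x s ^ k) - ?T^k / ?M^(k-1) = 0" using eq by simp
      ultimately show False using key[OF ne] by linarith
    qed
  next
    assume all: "\<forall>s\<in>Os. x s = ?m"
    have "(\<Sum>s\<in>Os. x s^(Suc k') - ?m^(Suc k') - real (Suc k') * ?m^k' * (x s - ?m)) = (\<Sum>s\<in>Os. 0)"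
    proof (rule sum.cong)
      fix s assume "s \<in> Os"
      then have xs: "x s = ?m" using all by blast
      show "x s^(Suc k') - ?m^(Suc k') - real (Suc k') * ?m^k' * (x s - ?m) = 0"
        unfolding xs by simp
    qed simp
    then show "(\<Sum>s\<in>Os. x s ^ k) = ?T^k / ?M^(k-1)" using key[OF ne] by simp
  qed
qed


locale ctx =
  fixes W V :: "(complex^'n) set" and w v :: "nat \<Rightarrow> complex^'n" and N :: nat
  assumes sW: "vec.subspace W" and sV: "vec.subspace V"
    and ds: "cdirect_sum W (corth V)"
    and fr: "frame_for W w N"
    and od: "oblique_dual_frame W V w v N"
begin

definition "piW f = (\<Sum>i<N. cinner f (v i) *s w i)"
definition "G i j = cinner (w i) (v j)"

lemma wW: "i < N \<Longrightarrow> w i \<in> W" using fr by (simp add: frame_for_def)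
lemma vV: "i < N \<Longrightarrow> v i \<in> V" using od by (simp add: frame_for_def oblique_dual_frame_def)
lemma W_span: "W = vec.span (w ` {..<N})" using fr by (simp add: frame_for_def)

lemma WcV: "W \<inter> corth V = {0}" using ds by (simp add: cdirect_sum_def)

lemma pi_eq: "oblique_proj W (corth V) f = piW f"
  using od by (simp add: oblique_dual_frame_def piW_def)

lemma pi_prop: "piW f \<in> W \<and> f - piW f \<in> corth V"
proof -
  obtain a b where "a \<in> W" "b \<in> corth V" "f = a + b" using ds unfolding cdirect_sum_def by blast
  then have "\<exists>a\<in>W. f - a \<in> corth V" by force
  from oblique_proj_prop[OF sW corth_subspace WcV this] show ?thesis by (simp add: pi_eq)
qed

lemma pi_id: assumes "x \<in> W" shows "piW x = x"
proof -
  have "x - x \<in> corth V" using vec.subspace_0[OF corth_subspace] by simp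
  from oblique_proj_unique[OF sW corth_subspace WcV assms this] show ?thesis by (simp add: pi_eq)
qed

lemma corth_mem: "b \<in> corth A \<Longrightarrow> a \<in> A \<Longrightarrow> cinner b a = 0"
  by (simp add: corth_def)

lemma VcW: "V \<inter> corth W = {0}"
proof -
  have "x = 0" if x: "x \<in> V" "x \<in> corth W" for x
  proof -
    have p: "piW x \<in> W" "x - piW x \<in> corth V" using pi_prop by auto
    have "cinner x x = cinner (piW x) x + cinner (x - piW x) x" by (simp add: cinner_diff_left)
    also have "cinner (piW x) x = 0" using corth_mem[OF x(2) p(1)] by (subst cinner_commute) simp
    also have "cinner (x - piW x) x = 0" using corth_mem[OF p(2) x(1)] .
    finally show ?thesis by (simp add: cinner_self_eq_0)
  qed
  then show ?thesis using sV corth_subspace vec.subspace_0 by blast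
qed

lemma G_idem: "i < N \<Longrightarrow> (\<Sum>k<N. G i k * G k j) = G i j"
proof -
  assume i: "i < N"
  have "(\<Sum>k<N. G i k * G k j) = cinner (piW (w i)) (v j)"
    by (simp add: piW_def G_def cinner_sum_left cinner_scale_left)
  also have "\<dots> = G i j" using pi_id[OF wW[OF i]] by (simp add: G_def)
  finally show ?thesis .
qed

lemma dim_le: "vec.dim W \<le> N"
proof -
  have "vec.dim W \<le> card (w ` {..<N})" using W_span by (intro vec.dim_le_card) auto
  also have "\<dots> \<le> N" using card_image_le[of "{..<N}" w] by simp
  finally show ?thesis .
qed

lemma trace_G: "(\<Sum>i<N. G i i) = of_nat (vec.dim W)"
proof -
  obtain E where E: "E \<subseteq> W" "vec.independent E" "W \<subseteq> vec.span E" "card E = vec.dim W"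
    using vec.basis_exists by blast
  have fE: "finite E" using E(2) vec.finiteI_independent by blast
  have "\<exists>c. w i = (\<Sum>e\<in>E. c e *s e)" if "i < N" for i
    using wW[OF that] E(3) vec.span_finite[OF fE] by auto
  then obtain c where c: "\<And>i. i < N \<Longrightarrow> w i = (\<Sum>e\<in>E. c i e *s e)" by metis
  have delta: "(\<Sum>i<N. cinner e (v i) * c i e') = (if e = e' then 1 else 0)" if e: "e \<in> E" "e' \<in> E" for e e'
  proof -
    have "e = piW e" using pi_id E(1) e by auto
    also have "\<dots> = (\<Sum>i<N. cinner e (v i) *s (\<Sum>e'\<in>E. c i e' *s e'))"
      unfolding piW_def by (rule sum.cong) (auto simp: c)
    also have "\<dots> = (\<Sum>e'\<in>E. (\<Sum>i<N. cinner e (v i) * c i e') *s e')"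
      by (simp add: vec.scale_sum_right vector_smult_assoc sum_distrib_right vec.scale_sum_left)
         (rule sum.swap)
    finally have eq: "e = (\<Sum>e'\<in>E. (\<Sum>i<N. cinner e (v i) * c i e') *s e')" .
    have "e = (\<Sum>e'\<in>E. (if e = e' then 1 else 0) *s e')"
      using e fE by (simp add: if_distrib[of "\<lambda>t. t *s _"] sum.delta cong: if_cong)
    with eq have z: "(\<Sum>e'\<in>E. ((\<Sum>i<N. cinner e (v i) * c i e') - (if e = e' then 1 else 0)) *s e') = 0"
      unfolding vec.scale_left_diff_distrib sum_subtractf by simp
    have ind: "\<forall>c. (\<Sum>v\<in>E. c v *s v) = 0 \<longrightarrow> (\<forall>v\<in>E. c v = 0)"
      using E(2) unfolding vec.independent_explicit by blast
    have "(\<Sum>i<N. cinner e (v i) * c i e') - (if e = e' then 1 else 0) = 0"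
      using ind[rule_format, OF z] e(2) by simp
    then show ?thesis by simp
  qed
  have "(\<Sum>i<N. G i i) = (\<Sum>i<N. \<Sum>e\<in>E. c i e * cinner e (v i))"
    by (rule sum.cong) (auto simp: G_def c cinner_sum_left[OF fE] cinner_scale_left)
  also have "\<dots> = (\<Sum>e\<in>E. \<Sum>i<N. cinner e (v i) * c i e)"
    by (subst sum.swap) (simp add: mult.commute)
  also have "\<dots> = (\<Sum>e\<in>E. 1)" using delta by simp
  finally show ?thesis using E(4) by simp
qed


definition "S = frame_operator w N"

lemma S_mult: "S *v x = (\<Sum>i<N. cinner x (w i) *s w i)"
  by (simp add: S_def frame_op_mult)

lemma S_in_W: "S *v x \<in> W"
  unfolding S_mult by (rule vec.subspace_sum[OF sW]) (simp add: vec.subspace_scale[OF sW] wW)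

lemma S_herm: "cinner (S *v x) y = cinner x (S *v y)"
  unfolding S_mult
  by (simp add: cinner_sum_left cinner_sum_right cinner_scale_left cinner_scale_right)
     (rule sum.cong, simp, subst (2) cinner_commute, simp add: mult.commute)

lemma S_self: "cinner (S *v x) x = complex_of_real (\<Sum>i<N. (cmod (cinner x (w i)))^2)"
  unfolding S_mult of_real_sum
  by (simp add: cinner_sum_left cinner_scale_left)
     (rule sum.cong, simp, subst (2) cinner_commute, simp add: mult_cnj_sq)

lemma S_zero_corth: assumes "S *v x = 0" shows "x \<in> corth W"
proof -
  have "(\<Sum>i<N. (cmod (cinner x (w i)))^2) = 0" using S_self[of x] assms by (metis cinner_zero_left of_real_eq_0_iff)
  then have "\<forall>i\<in>{..<N}. (cmod (cinner x (w i)))^2 = 0" by (subst (asm) sum_nonneg_eq_0_iff) auto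
  then have "\<And>s. s \<in> w ` {..<N} \<Longrightarrow> cinner x s = 0" by auto
  then show ?thesis unfolding corth_def using cinner_span_zero W_span by blast
qed

lemma corth_S_zero: assumes "x \<in> corth W" shows "S *v x = 0"
  unfolding S_mult using assms wW by (simp add: corth_def)

lemma W_corth_zero: "x \<in> W \<Longrightarrow> x \<in> corth W \<Longrightarrow> x = 0"
  unfolding corth_def by (metis (mono_tags, lifting) cinner_self_eq_0 mem_Collect_eq)

lemma S_inj: assumes "a \<in> W" "b \<in> W" "S *v a = S *v b" shows "a = b"
proof -
  have "S *v (a - b) = 0" using assms by (simp add: matrix_vector_mult_diff_distrib)
  then have "a - b \<in> corth W" by (rule S_zero_corth)
  moreover have "a - b \<in> W" using assms sW by (simp add: vec.subspace_diff)
  ultimately show ?thesis using W_corth_zero by fastforce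
qed

lemma decompW: obtains a b where "a \<in> W" "b \<in> corth W" "x = a + b"
proof -
  obtain y where "y \<in> W" "\<And>r. r \<in> W \<Longrightarrow> cinner (x - y) r = 0" using complex_decomp[OF sW] by blast
  then show thesis using that[of y "x - y"] by (auto simp: corth_def)
qed

lemma S_decomp: "a \<in> W \<Longrightarrow> b \<in> corth W \<Longrightarrow> S *v (a + b) = S *v a"
  using corth_S_zero by (simp add: matrix_vector_right_distrib)

lemma S_surj: assumes "y \<in> W" shows "\<exists>u\<in>W. S *v u = y"
proof -
  let ?R = "range (\<lambda>x. S *v x)"
  obtain s where s: "s \<in> ?R" "\<And>r. r \<in> ?R \<Longrightarrow> cinner (y - s) r = 0"
    using complex_decomp[OF range_mv_subspace] by blast
  let ?z = "y - s"
  have "cinner (S *v ?z) (S *v ?z) = cinner ?z (S *v (S *v ?z))" by (rule S_herm)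
  also have "\<dots> = 0" using s(2) by simp
  finally have "S *v ?z = 0" by (simp add: cinner_self_eq_0)
  then have "?z \<in> corth W" by (rule S_zero_corth)
  moreover have "?z \<in> W" using assms s(1) S_in_W sW by (auto simp: vec.subspace_diff)
  ultimately have "y = s" using W_corth_zero by fastforce
  then obtain t where t: "y = S *v t" using s(1) by auto
  obtain a b where "a \<in> W" "b \<in> corth W" "t = a + b" by (rule decompW)
  then show ?thesis using t S_decomp by auto
qed

definition "u j = (SOME u. u \<in> W \<and> S *v u = w j)"

lemma u_prop: "j < N \<Longrightarrow> u j \<in> W \<and> S *v u j = w j"
  unfolding u_def by (rule someI_ex) (use S_surj wW in blast)

definition "X0 = (\<chi> a b. \<Sum>j<N. u j $ a * cnj (u j $ b))"

lemma X0_mult: "X0 *v y = (\<Sum>j<N. cinner y (u j) *s u j)"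
  apply (simp add: vec_eq_iff X0_def matrix_vector_mult_def cinner_def sum_component
      sum_distrib_left sum_distrib_right)
  apply (subst sum.swap) apply (simp add: mult_ac)
  done

lemma X0_in_W: "X0 *v y \<in> W"
  unfolding X0_mult by (rule vec.subspace_sum[OF sW]) (simp add: vec.subspace_scale[OF sW] u_prop)

lemma X0_corth: "b \<in> corth W \<Longrightarrow> X0 *v b = 0"
  unfolding X0_mult using u_prop by (simp add: corth_def)

lemma SX0: assumes "a \<in> W" shows "S *v (X0 *v a) = a"
proof -
  obtain t where t: "t \<in> W" "S *v t = a" using S_surj assms by blast
  have "S *v (X0 *v a) = (\<Sum>j<N. cinner (S *v t) (u j) *s w j)"
    unfolding X0_mult t(2)[symmetric] by (simp add: mv_sum mv_scale u_prop)
  also have "\<dots> = (\<Sum>j<N. cinner t (w j) *s w j)"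
    by (rule sum.cong) (simp_all add: S_herm u_prop)
  also have "\<dots> = a" using t S_mult by simp
  finally show ?thesis .
qed

lemma X0S: assumes "a \<in> W" shows "X0 *v (S *v a) = a"
  using S_inj[OF X0_in_W assms] SX0[OF S_in_W] by blast

lemma proj_herm:
  assumes "\<And>a b. a \<in> W \<Longrightarrow> b \<in> corth W \<Longrightarrow> M *v (a + b) = a"
  shows "cadjoint M = M"
proof (rule herm_from_cinner)
  fix x y :: "complex^'n"
  obtain a b where ab: "a \<in> W" "b \<in> corth W" "x = a + b" by (rule decompW)
  obtain a' b' where ab': "a' \<in> W" "b' \<in> corth W" "y = a' + b'" by (rule decompW)
  have "cinner b a' = 0" "cinner b' a = 0" using ab ab' by (auto simp: corth_def)
  then have "cinner a b' = 0" by (subst cinner_commute) simp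
  show "cinner (M *v x) y = cinner x (M *v y)"
    using ab ab' assms \<open>cinner b a' = 0\<close> \<open>cinner a b' = 0\<close>
    by (simp add: cinner_add_left cinner_add_right)
qed

lemma X0_penrose:
  "S ** X0 ** S = S" "X0 ** S ** X0 = X0" "cadjoint (S ** X0) = S ** X0" "cadjoint (X0 ** S) = X0 ** S"
proof -
  show "S ** X0 ** S = S" unfolding matrix_eq
  proof
    fix y
    obtain a b where ab: "a \<in> W" "b \<in> corth W" "y = a + b" by (rule decompW)
    then show "(S ** X0 ** S) *v y = S *v y"
      by (simp add: matrix_vector_mul_assoc[symmetric] S_decomp X0S)
  qed
  show "X0 ** S ** X0 = X0" unfolding matrix_eq
    by (simp add: matrix_vector_mul_assoc[symmetric] X0S X0_in_W)
  show "cadjoint (S ** X0) = S ** X0"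
    by (rule proj_herm) (simp add: matrix_vector_mul_assoc[symmetric] matrix_vector_right_distrib X0_corth SX0)
  show "cadjoint (X0 ** S) = X0 ** S"
    by (rule proj_herm) (simp add: matrix_vector_mul_assoc[symmetric] S_decomp X0S)
qed

lemma mp_S: "mp_inverse S = X0"
  unfolding mp_inverse_def
  by (rule the_equality) (use X0_penrose mp_unique in auto)


lemma exists_V: "\<exists>a\<in>V. y - a \<in> corth W"
proof
  let ?a = "\<Sum>i<N. cinner y (w i) *s v i"
  show "?a \<in> V" by (rule vec.subspace_sum[OF sV]) (simp add: vec.subspace_scale[OF sV] vV)
  have "cinner (y - ?a) x = 0" if x: "x \<in> W" for x
  proof -
    have "cinner y x = cinner y (piW x)" using pi_id[OF x] by simp
    also have "\<dots> = (\<Sum>i<N. cinner (v i) x * cinner y (w i))"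
      unfolding piW_def by (simp add: cinner_sum_right cinner_scale_right) (subst (2) cinner_commute, simp)
    also have "\<dots> = cinner ?a x" by (simp add: cinner_sum_left cinner_scale_left mult.commute)
    finally show ?thesis by (simp add: cinner_diff_left)
  qed
  then show "y - ?a \<in> corth W" by (simp add: corth_def)
qed

lemma herm_iff:
  "(\<forall>i<N. \<forall>j<N. G i j = cnj (G j i)) \<longleftrightarrow>
   (\<forall>j<N. v j = oblique_proj V (corth W) (mp_inverse S *v w j))"
proof
  assume herm: "\<forall>i<N. \<forall>j<N. G i j = cnj (G j i)"
  show "\<forall>j<N. v j = oblique_proj V (corth W) (mp_inverse S *v w j)"
  proof (intro allI impI)
    fix j assume j: "j < N"
    have "S *v v j = (\<Sum>k<N. G j k *s w k)"
      unfolding S_mult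
    proof (rule sum.cong)
      fix k assume "k \<in> {..<N}"
      then have h: "G k j = cnj (G j k)" using herm j by blast
      have "cinner (v j) (w k) = cnj (G k j)" by (subst cinner_commute) (simp add: G_def)
      then have "cinner (v j) (w k) = G j k" using h by simp
      then show "cinner (v j) (w k) *s w k = G j k *s w k" by simp
    qed simp
    also have "\<dots> = piW (w j)" by (simp add: piW_def G_def)
    also have "\<dots> = w j" using pi_id wW j by simp
    finally have Sv: "S *v v j = w j" .
    obtain a b where ab: "a \<in> W" "b \<in> corth W" "v j = a + b" by (rule decompW)
    have "S *v a = w j" using Sv S_decomp[OF ab(1,2)] ab(3) by simp
    then have "X0 *v w j = a" using X0S[OF ab(1)] by simp
    then have "X0 *v w j - v j = - b" using ab by simp
    also have "- b \<in> corth W" using vec.subspace_neg[OF corth_subspace ab(2)] .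
    finally have "oblique_proj V (corth W) (X0 *v w j) = v j"
      by (rule oblique_proj_unique[OF sV corth_subspace VcW vV[OF j]])
    then show "v j = oblique_proj V (corth W) (mp_inverse S *v w j)" by (simp add: mp_S)
  qed
next
  assume can: "\<forall>j<N. v j = oblique_proj V (corth W) (mp_inverse S *v w j)"
  have Gx: "G i j = cinner (w i) (X0 *v w j)" if ij: "i < N" "j < N" for i j
  proof -
    have "v j \<in> V \<and> X0 *v w j - v j \<in> corth W"
      using oblique_proj_prop[OF sV corth_subspace VcW exists_V] can ij by (simp add: mp_S)
    then have "cinner (X0 *v w j - v j) (w i) = 0" using wW ij by (simp add: corth_def)
    then have "cinner (w i) (X0 *v w j - v j) = 0" by (subst cinner_commute) simp
    then show ?thesis by (simp add: G_def cinner_diff_right)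
  qed
  show "\<forall>i<N. \<forall>j<N. G i j = cnj (G j i)"
  proof (intro allI impI)
    fix i j assume ij: "i < N" "j < N"
    have "G i j = cinner (S *v (X0 *v w i)) (X0 *v w j)" using Gx ij SX0 wW by simp
    also have "\<dots> = cinner (X0 *v w i) (S *v (X0 *v w j))" by (rule S_herm)
    also have "\<dots> = cinner (X0 *v w i) (w j)" using SX0 wW ij by simp
    also have "\<dots> = cnj (G j i)" using Gx ij by (subst cinner_commute) simp
    finally show "G i j = cnj (G j i)" .
  qed
qed


lemma cmod_diff_cnj: "(cmod (a - cnj b))^2 = (cmod a)^2 + (cmod b)^2 - 2 * Re (a * b)"
  by (simp only: cmod_power2) (simp add: power2_eq_square algebra_simps)

definition "F = (\<Sum>i<N. \<Sum>j<N. (cmod (G i j))^2)"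

lemma frob: "(\<Sum>i<N. \<Sum>j<N. (cmod (G i j - cnj (G j i)))^2) = 2 * F - 2 * real (vec.dim W)"
proof -
  have "(\<Sum>i<N. \<Sum>j<N. (cmod (G i j - cnj (G j i)))^2)
      = (\<Sum>i<N. \<Sum>j<N. (cmod (G i j))^2) + (\<Sum>i<N. \<Sum>j<N. (cmod (G j i))^2)
        - 2 * Re (\<Sum>i<N. \<Sum>j<N. G i j * G j i)"
    by (simp add: cmod_diff_cnj sum.distrib sum_subtractf sum_distrib_left)
  also have "(\<Sum>i<N. \<Sum>j<N. (cmod (G j i))^2) = F" unfolding F_def by (rule sum.swap)
  also have "(\<Sum>i<N. \<Sum>j<N. G i j * G j i) = (\<Sum>i<N. G i i)"
    by (rule sum.cong) (simp_all add: G_idem)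
  also have "\<dots> = of_nat (vec.dim W)" by (rule trace_G)
  finally show ?thesis unfolding F_def by simp
qed

lemma F_ge: "F \<ge> real (vec.dim W)"
proof -
  have "0 \<le> (\<Sum>i<N. \<Sum>j<N. (cmod (G i j - cnj (G j i)))^2)" by (simp add: sum_nonneg)
  then show ?thesis using frob by simp
qed

lemma F_eq_iff: "F = real (vec.dim W) \<longleftrightarrow> (\<forall>i<N. \<forall>j<N. G i j = cnj (G j i))"
proof -
  have "F = real (vec.dim W) \<longleftrightarrow> (\<Sum>i<N. \<Sum>j<N. (cmod (G i j - cnj (G j i)))^2) = 0"
    using frob by simp
  also have "\<dots> \<longleftrightarrow> (\<forall>i\<in>{..<N}. \<forall>j\<in>{..<N}. (cmod (G i j - cnj (G j i)))^2 = 0)"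
  proof -
    have inner: "(\<Sum>j<N. (cmod (G i j - cnj (G j i)))^2) = 0 \<longleftrightarrow> (\<forall>j\<in>{..<N}. (cmod (G i j - cnj (G j i)))^2 = 0)" for i
      by (rule sum_nonneg_eq_0_iff) auto
    have "(\<Sum>i<N. \<Sum>j<N. (cmod (G i j - cnj (G j i)))^2) = 0 \<longleftrightarrow> (\<forall>i\<in>{..<N}. (\<Sum>j<N. (cmod (G i j - cnj (G j i)))^2) = 0)"
      by (rule sum_nonneg_eq_0_iff) (auto intro: sum_nonneg)
    then show ?thesis using inner by simp
  qed
  also have "\<dots> \<longleftrightarrow> (\<forall>i<N. \<forall>j<N. G i j = cnj (G j i))" by auto
  finally show ?thesis .
qed


definition "Off = Sigma {..<N} (\<lambda>i. {..<N} - {i})"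

lemma finOff: "finite Off" unfolding Off_def by auto

lemma cardOff: "card Off = N * (N - 1)"
  unfolding Off_def by (simp add: card_Diff_singleton)

lemma memOff: "(i, j) \<in> Off \<longleftrightarrow> i < N \<and> j < N \<and> i \<noteq> j"
  unfolding Off_def by auto

lemma split_sum: "(\<Sum>i<N. \<Sum>j<N. f i j) = (\<Sum>i<N. f i i) + (\<Sum>s\<in>Off. f (fst s) (snd s))"
proof -
  have "(\<Sum>i<N. \<Sum>j<N. f i j) = (\<Sum>i<N. f i i + (\<Sum>j\<in>{..<N} - {i}. f i j))"
    by (rule sum.cong) (simp_all add: sum.remove)
  also have "\<dots> = (\<Sum>i<N. f i i) + (\<Sum>i<N. \<Sum>j\<in>{..<N} - {i}. f i j)" by (simp add: sum.distrib)
  also have "(\<Sum>i<N. \<Sum>j\<in>{..<N} - {i}. f i j) = (\<Sum>s\<in>Off. f (fst s) (snd s))"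
    unfolding Off_def by (subst sum.Sigma) (auto simp: case_prod_beta)
  finally show ?thesis .
qed

lemma main:
  assumes diag: "\<forall>i<N. \<forall>j<N. G i i = G j j" and k: "k \<ge> 1"
  defines "d \<equiv> real (vec.dim W)" and "p \<equiv> 2 * k"
  shows "(\<Sum>i<N. \<Sum>j<N. cmod (G i j) ^ p)
           \<ge> \<bar>d - d\<^sup>2 / real N\<bar> ^ (p div 2)
               / (real N ^ (p div 2 - 1) * (real N - 1) ^ (p div 2 - 1))
             + d ^ p / real N ^ (p - 1)
         \<and>
         (k > 1 \<longrightarrow>
          (((\<Sum>i<N. \<Sum>j<N. cmod (G i j) ^ p)
             = \<bar>d - d\<^sup>2 / real N\<bar> ^ (p div 2)
               / (real N ^ (p div 2 - 1) * (real N - 1) ^ (p div 2 - 1))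
             + d ^ p / real N ^ (p - 1))
          \<longleftrightarrow>
           ((\<exists>c. \<forall>i<N. \<forall>j<N. i \<noteq> j \<longrightarrow> cmod (G i j) = c) \<and>
            (\<forall>j<N. v j = oblique_proj V (corth W) (mp_inverse S *v w j)))))"
proof -
  define x where "x i j = (cmod (G i j))^2" for i j
  define xs where "xs s = x (fst s) (snd s)" for s
  define M where "M = real (card Off)"
  define T where "T = (\<Sum>s\<in>Off. xs s)"
  define A where "A = (\<Sum>s\<in>Off. xs s ^ k)"
  define D where "D = d - d\<^sup>2 / real N"
  have pk: "p div 2 = k" "p - 1 = 2 * k - 1" unfolding p_def by auto
  have pw: "cmod (G i j) ^ p = x i j ^ k" for i j unfolding x_def p_def by (simp add: power_mult)
  have xnn: "x i j \<ge> 0" for i j unfolding x_def by simp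
  have dN: "d \<le> real N" using dim_le unfolding d_def by simp
  have d0: "d \<ge> 0" unfolding d_def by simp
  have M_eq: "M = real N * (real N - 1)" unfolding M_def cardOff by (cases N) (auto simp: algebra_simps)
  have M0: "M \<ge> 0" unfolding M_def by simp
  have den: "real N ^ (p div 2 - 1) * (real N - 1) ^ (p div 2 - 1) = M ^ (k - 1)"
    unfolding pk M_eq by (simp add: power_mult_distrib)
  have D0: "D \<ge> 0"
  proof (cases "N = 0")
    case True then show ?thesis using dN d0 unfolding D_def by simp
  next
    case False
    then have "d\<^sup>2 / real N \<le> d" using dN d0 by (simp add: power2_eq_square divide_le_eq mult_left_mono)
    then show ?thesis unfolding D_def by simp
  qed
  have Gii: "G i i = complex_of_real (d / real N)" if i: "i < N" for i
  proof -
    have "(\<Sum>j<N. G j j) = (\<Sum>j<N. G i i)"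
    proof (rule sum.cong)
      fix j assume "j \<in> {..<N}"
      then show "G j j = G i i" using diag[rule_format, of j i] i by simp
    qed simp
    then have "of_nat N * G i i = of_real d" using trace_G unfolding d_def by simp
    moreover have "N > 0" using i by simp
    ultimately show ?thesis by (simp add: field_simps)
  qed
  have xii: "x i i = (d / real N)^2" if "i < N" for i
    unfolding x_def Gii[OF that] by (simp only: norm_of_real power2_abs)
  have diagsum: "(\<Sum>i<N. x i i ^ k) = d ^ p / real N ^ (p - 1)"
  proof (cases "N = 0")
    case True then show ?thesis using dN d0 k unfolding p_def by simp
  next
    case False
    have "(\<Sum>i<N. x i i ^ k) = real N * (d / real N) ^ p" using xii unfolding p_def by (simp add: power_mult)
    also have "\<dots> = d ^ p / real N ^ (p - 1)" using False k unfolding p_def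
      by (simp add: power_divide field_simps power_diff)
    finally show ?thesis .
  qed
  have diagsum2: "(\<Sum>i<N. x i i) = d\<^sup>2 / real N"
  proof (cases "N = 0")
    case True then show ?thesis using dN d0 by simp
  next
    case False
    have "(\<Sum>i<N. x i i) = (\<Sum>i<N. (d / real N)^2)" by (rule sum.cong) (simp_all add: xii)
    also have "\<dots> = d\<^sup>2 / real N" using False by (simp add: power2_eq_square)
    finally show ?thesis .
  qed
  have FT: "F = d\<^sup>2 / real N + T"
    unfolding F_def T_def xs_def using split_sum[of x] diagsum2 by (simp add: x_def)
  have TD: "T \<ge> D" using F_ge FT unfolding D_def d_def by simp
  have T_D_iff: "T = D \<longleftrightarrow> (\<forall>j<N. v j = oblique_proj V (corth W) (mp_inverse S *v w j))"
    using FT F_eq_iff herm_iff unfolding D_def d_def by auto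
  have LHS: "(\<Sum>i<N. \<Sum>j<N. cmod (G i j) ^ p) = d ^ p / real N ^ (p - 1) + A"
    unfolding pw A_def xs_def using split_sum[of "\<lambda>i j. x i j ^ k"] diagsum by simp
  have RHS: "\<bar>d - d\<^sup>2 / real N\<bar> ^ (p div 2) / (real N ^ (p div 2 - 1) * (real N - 1) ^ (p div 2 - 1))
      = D ^ k / M ^ (k - 1)"
    unfolding den using D0 unfolding D_def pk by simp
  have pm1: "T ^ k / M ^ (k - 1) \<le> A"
    using power_mean(1)[OF finOff, of xs k] xnn k unfolding T_def A_def M_def xs_def by simp
  have DT: "D ^ k / M ^ (k - 1) \<le> T ^ k / M ^ (k - 1)"
    by (rule divide_right_mono) (use power_mono[OF TD D0] M0 in auto)
  have ineq: "D ^ k / M ^ (k - 1) \<le> A" using pm1 DT by linarith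
  show ?thesis
  proof (intro conjI impI)
    show "(\<Sum>i<N. \<Sum>j<N. cmod (G i j) ^ p)
           \<ge> \<bar>d - d\<^sup>2 / real N\<bar> ^ (p div 2)
               / (real N ^ (p div 2 - 1) * (real N - 1) ^ (p div 2 - 1))
             + d ^ p / real N ^ (p - 1)"
      unfolding LHS RHS using ineq by simp
  next
    assume k2: "k > 1"
    have "((\<Sum>i<N. \<Sum>j<N. cmod (G i j) ^ p)
             = \<bar>d - d\<^sup>2 / real N\<bar> ^ (p div 2)
               / (real N ^ (p div 2 - 1) * (real N - 1) ^ (p div 2 - 1))
             + d ^ p / real N ^ (p - 1)) \<longleftrightarrow> A = D ^ k / M ^ (k - 1)"
      unfolding LHS RHS by linarith
    also have "\<dots> \<longleftrightarrow> ((\<exists>c. \<forall>i<N. \<forall>j<N. i \<noteq> j \<longrightarrow> cmod (G i j) = c) \<and>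
            (\<forall>j<N. v j = oblique_proj V (corth W) (mp_inverse S *v w j)))"
    proof (cases "Off = {}")
      case True
      then have N1: "N \<le> 1" using cardOff by (cases N) auto
      have A0: "A = 0" unfolding A_def using True by simp
      have "M = 0" unfolding M_def using True by simp
      then have R0: "D ^ k / M ^ (k - 1) = 0" using k2 by simp
      have c: "\<exists>c. \<forall>i<N. \<forall>j<N. i \<noteq> j \<longrightarrow> cmod (G i j) = c" using N1 by auto
      have T0: "T = 0" unfolding T_def using True by simp
      have "D = 0"
      proof (cases "N = 0")
        case True then show ?thesis using dN d0 unfolding D_def by simp
      next
        case False
        then have "N = 1" using N1 by simp
        moreover have "vec.dim W \<le> 1" using dim_le N1 by simp
        then have "vec.dim W = 0 \<or> vec.dim W = 1" by linarith
        then have "d = 0 \<or> d = 1" unfolding d_def by (metis of_nat_0 of_nat_1)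
        ultimately show ?thesis unfolding D_def by auto
      qed
      then have "T = D" using T0 by simp
      then show ?thesis using T_D_iff c A0 R0 by simp
    next
      case False
      then have Mpos: "M > 0" unfolding M_def using finOff by (simp add: card_gt_0_iff)
      then have Mk: "M ^ (k - 1) > 0" by simp
      have pm2: "A = T ^ k / M ^ (k - 1) \<longleftrightarrow> (\<forall>s\<in>Off. xs s = T / M)"
        using power_mean(2)[OF finOff, of xs k] xnn k k2 False unfolding T_def A_def M_def xs_def by simp
      show ?thesis
      proof
        assume eq: "A = D ^ k / M ^ (k - 1)"
        then have "T ^ k / M ^ (k - 1) = D ^ k / M ^ (k - 1)" using pm1 DT by linarith
        then have "T ^ k = D ^ k" using Mk Mpos by (simp add: divide_cancel_right)
        then have TD': "T = D" using power_eq_imp_eq_base[of T k D] TD D0 k by simp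
        then have "A = T ^ k / M ^ (k - 1)" using eq by simp
        then have all: "\<forall>s\<in>Off. xs s = T / M" using pm2 by simp
        have "\<forall>i<N. \<forall>j<N. i \<noteq> j \<longrightarrow> cmod (G i j) = sqrt (T / M)"
        proof (intro allI impI)
          fix i j assume "i < N" "j < N" "i \<noteq> j"
          then have "(i, j) \<in> Off" by (simp add: memOff)
          then have "x i j = T / M" using all unfolding xs_def by force
          then show "cmod (G i j) = sqrt (T / M)" unfolding x_def by (metis norm_ge_zero real_sqrt_abs abs_of_nonneg)
        qed
        then show "(\<exists>c. \<forall>i<N. \<forall>j<N. i \<noteq> j \<longrightarrow> cmod (G i j) = c) \<and>
            (\<forall>j<N. v j = oblique_proj V (corth W) (mp_inverse S *v w j))" using TD' T_D_iff by blast
      next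
        assume R: "(\<exists>c. \<forall>i<N. \<forall>j<N. i \<noteq> j \<longrightarrow> cmod (G i j) = c) \<and>
            (\<forall>j<N. v j = oblique_proj V (corth W) (mp_inverse S *v w j))"
        then obtain c where c: "\<forall>i<N. \<forall>j<N. i \<noteq> j \<longrightarrow> cmod (G i j) = c" by blast
        have TD': "T = D" using R T_D_iff by blast
        have xc: "xs s = c\<^sup>2" if "s \<in> Off" for s
        proof -
          obtain i j where s: "s = (i, j)" by (cases s)
          then have "i < N" "j < N" "i \<noteq> j" using that by (auto simp: memOff)
          then have "cmod (G i j) = c" using c by blast
          then show ?thesis unfolding xs_def x_def s by simp
        qed
        have "T = M * c\<^sup>2" unfolding T_def M_def using xc by simp
        then have "T / M = c\<^sup>2" using Mpos by simp
        then have "\<forall>s\<in>Off. xs s = T / M" using xc by simp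
        then have "A = T ^ k / M ^ (k - 1)" using pm2 by simp
        then show "A = D ^ k / M ^ (k - 1)" using TD' by simp
      qed
    qed
    finally show "((\<Sum>i<N. \<Sum>j<N. cmod (G i j) ^ p)
             = \<bar>d - d\<^sup>2 / real N\<bar> ^ (p div 2)
               / (real N ^ (p div 2 - 1) * (real N - 1) ^ (p div 2 - 1))
             + d ^ p / real N ^ (p - 1))
          \<longleftrightarrow>
           ((\<exists>c. \<forall>i<N. \<forall>j<N. i \<noteq> j \<longrightarrow> cmod (G i j) = c) \<and>
            (\<forall>j<N. v j = oblique_proj V (corth W) (mp_inverse S *v w j)))" .
  qed
qed

end

theorem corollary3p6:
  fixes W V :: "(complex^'n) set" and w v :: "nat \<Rightarrow> complex^'n" and N k :: nat
  assumes "vec.subspace W" and "vec.subspace V"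
    and "cdirect_sum W (corth V)"
    and "frame_for W w N"
    and "oblique_dual_frame W V w v N"
    and "\<forall>i<N. \<forall>j<N. cinner (w i) (v i) = cinner (w j) (v j)"
    and "k \<ge> 1"
  defines "S \<equiv> frame_operator w N"
    and "d \<equiv> real (vec.dim W)"
    and "p \<equiv> 2 * k"
  shows "(\<Sum>i<N. \<Sum>j<N. cmod (cinner (w i) (v j)) ^ p)
           \<ge> \<bar>d - d\<^sup>2 / real N\<bar> ^ (p div 2)
               / (real N ^ (p div 2 - 1) * (real N - 1) ^ (p div 2 - 1))
             + d ^ p / real N ^ (p - 1)
         \<and>
         (k > 1 \<longrightarrow>
          (((\<Sum>i<N. \<Sum>j<N. cmod (cinner (w i) (v j)) ^ p)
             = \<bar>d - d\<^sup>2 / real N\<bar> ^ (p div 2)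
               / (real N ^ (p div 2 - 1) * (real N - 1) ^ (p div 2 - 1))
             + d ^ p / real N ^ (p - 1))
          \<longleftrightarrow>
           ((\<exists>c. \<forall>i<N. \<forall>j<N. i \<noteq> j \<longrightarrow> cmod (cinner (w i) (v j)) = c) \<and>
            (\<forall>j<N. v j = oblique_proj V (corth W) (mp_inverse S *v w j)))))"
proof -
  interpret c: ctx W V w v N using assms(1-5) by unfold_locales
  have diag: "\<forall>i<N. \<forall>j<N. c.G i i = c.G j j" unfolding c.G_def by (rule assms(6))
  have SS: "c.S = S" by (simp add: c.S_def S_def)
  show ?thesis using c.main[OF diag assms(7)] unfolding c.G_def SS d_def p_def .
qed

end
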